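(* In the comparison model (where letters can be accessed only through comparisons), every algorithm solving the witness s-cover testing problem requires $\Omega(n\log n)$ comparisons in the worst case on inputs where $S$ has length $n$.
   Context: For words $C,S$, $C$ is an \emph{s-cover} of $S$ if for every position $i$ of $S$ there exist indices $j_0<\dots<j_{|C|-1}$ with $S[j_t]=C[t]$ for all $t$ and $i\in\{j_0,\dots,j_{|C|-1}\}$. The \emph{witness s-cover testing problem}: given words $C$ and $S$, decide whether $C$ is an s-cover of $S$, and if so, output for every position $i$ of $S$ a position $j$ of $C$ such that some occurrence $j_0<\dots<j_{|C|-1}$ of $C$ as a subsequence of $S$ has $j_j=i$ (any such $j$ may be output). *)

theory Defs
  imports Complex_Main
begin

text \<open>Words are lists of letters; letters are natural numbers (an infinite linearly
ordered alphabet).  Positions are 0-based.\<close>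

definition occurrence :: "nat list \<Rightarrow> nat list \<Rightarrow> nat list \<Rightarrow> bool" where
  "occurrence C S js \<longleftrightarrow> length js = length C \<and> sorted_wrt (<) js \<and>
     (\<forall>t<length C. js ! t < length S \<and> S ! (js ! t) = C ! t)"

definition s_cover :: "nat list \<Rightarrow> nat list \<Rightarrow> bool" where
  "s_cover C S \<longleftrightarrow> (\<forall>i<length S. \<exists>js. occurrence C S js \<and> i \<in> set js)"

definition witness_ok :: "nat list \<Rightarrow> nat list \<Rightarrow> nat list \<Rightarrow> bool" where
  "witness_ok C S w \<longleftrightarrow> length w = length S \<and>
     (\<forall>i<length S. w ! i < length C \<and> (\<exists>js. occurrence C S js \<and> js ! (w ! i) = i))"

text \<open>Comparison model: an algorithm (for fixed input lengths) is a ternary decision tree.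
An inner node compares the letters at two positions (the boolean selects the word:
True = C, False = S) and branches on <, =, >.  A leaf outputs the answer:
None = "C is not an s-cover of S", Some w = "C is an s-cover, with witnesses w".\<close>
datatype dtree =
    Leaf "nat list option"
  | Cmp "bool \<times> nat" "bool \<times> nat" dtree dtree dtree

definition letter :: "nat list \<Rightarrow> nat list \<Rightarrow> bool \<times> nat \<Rightarrow> nat" where
  "letter C S p = (if fst p then C ! snd p else S ! snd p)"

definition valid_pos :: "nat list \<Rightarrow> nat list \<Rightarrow> bool \<times> nat \<Rightarrow> bool" where
  "valid_pos C S p \<longleftrightarrow> snd p < length (if fst p then C else S)"

text \<open>Comparisons involving an out-of-range position go to the middle branch (carry no
information about the input) but are still counted.\<close>
fun run :: "dtree \<Rightarrow> nat list \<Rightarrow> nat list \<Rightarrow> nat list option \<times> nat" where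
  "run (Leaf r) C S = (r, 0)"
| "run (Cmp p q t_lt t_eq t_gt) C S =
     (let (r, k) =
        (if valid_pos C S p \<and> valid_pos C S q then
           (if letter C S p < letter C S q then run t_lt C S
            else if letter C S p = letter C S q then run t_eq C S
            else run t_gt C S)
         else run t_eq C S)
      in (r, Suc k))"

definition solves_witness_scover :: "(nat \<Rightarrow> nat \<Rightarrow> dtree) \<Rightarrow> bool" where
  "solves_witness_scover A \<longleftrightarrow> (\<forall>C S.
     (case fst (run (A (length C) (length S)) C S) of
        None \<Rightarrow> \<not> s_cover C S
      | Some w \<Rightarrow> s_cover C S \<and> witness_ok C S w))"

definition comparisons :: "(nat \<Rightarrow> nat \<Rightarrow> dtree) \<Rightarrow> nat list \<Rightarrow> nat list \<Rightarrow> nat" where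
  "comparisons A C S = snd (run (A (length C) (length S)) C S)"

end

theory Submission imports Defs begin

fun lv :: "dtree \<Rightarrow> nat \<Rightarrow> nat list option set" where
  "lv (Leaf r) d = {r}"
| "lv (Cmp p q a b c) 0 = {}"
| "lv (Cmp p q a b c) (Suc d) = lv a d \<union> lv b d \<union> lv c d"

lemma lv_fin: "finite (lv t d)"
  by (induction t d rule: lv.induct) auto

lemma lv_card: "card (lv t d) \<le> 3 ^ d"
proof (induction t d rule: lv.induct)
  case (1 r d) then show ?case by simp
next
  case (2 p q a b c) then show ?case by simp
next
  case (3 p q a b c d)
  have "card (lv a d \<union> lv b d \<union> lv c d) \<le> card (lv a d) + card (lv b d) + card (lv c d)"
    by (meson add_mono card_Un_le le_trans order_refl)
  then show ?case using 3 by simp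
qed

lemma run_lv: "snd (run t C S) \<le> d \<Longrightarrow> fst (run t C S) \<in> lv t d"
proof (induction t arbitrary: d)
  case (Leaf r) then show ?case by simp
next
  case (Cmp p q a b c)
  then obtain d' where d: "d = Suc d'" by (cases d) (auto split: prod.splits if_splits)
  show ?case using Cmp d by (auto split: prod.splits if_splits)
qed

lemma occ:
  assumes len: "length S = k + m + k"
    and b1: "\<forall>j<k. S ! j = j" and b2: "\<forall>j<k. S ! (k + m + j) = j"
    and i: "i < length S" "S ! i = a" "a < k" "a \<le> i" "i \<le> k + m + a"
  shows "occurrence [0..<k] S (map (\<lambda>j. if j < a then j else if j = a then i else k + m + j) [0..<k])"
  unfolding occurrence_def using len b1 b2 i by (auto simp: sorted_wrt_iff_nth_less)

definition SS :: "nat \<Rightarrow> nat list \<Rightarrow> nat list" where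
  "SS k T = [0..<k] @ T @ [0..<k]"

lemma SS_cover:
  assumes "set T \<subseteq> {0..<k}"
  shows "s_cover [0..<k] (SS k T)"
  unfolding s_cover_def
proof (intro allI impI)
  fix i assume i: "i < length (SS k T)"
  let ?m = "length T"
  have len: "length (SS k T) = k + ?m + k" by (simp add: SS_def)
  have b1: "\<forall>j<k. SS k T ! j = j" by (simp add: SS_def nth_append)
  have b2: "\<forall>j<k. SS k T ! (k + ?m + j) = j" by (simp add: SS_def nth_append)
  define a where "a = SS k T ! i"
  have ak: "a < k \<and> a \<le> i \<and> i \<le> k + ?m + a"
  proof (cases "i < k")
    case True then show ?thesis using b1 a_def by simp
  next
    case False
    show ?thesis
    proof (cases "i < k + ?m")
      case True
      then have "i - k < ?m" using False by simp
      then have "a = T ! (i - k)" using False by (simp add: a_def SS_def nth_append)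
      moreover have "T ! (i - k) \<in> set T" using True False by simp
      ultimately have "a < k" using assms by auto
      then show ?thesis using True False by simp
    next
      case F2: False
      then obtain j where j: "i = k + ?m + j" "j < k" using i len by (metis add_diff_inverse_nat add_less_cancel_left)
      then show ?thesis using b2 a_def by simp
    qed
  qed
  show "\<exists>js. occurrence [0..<k] (SS k T) js \<and> i \<in> set js"
    apply (rule exI[of _ "map (\<lambda>j. if j < a then j else if j = a then i else k + ?m + j) [0..<k]"])
    using occ[OF len b1 b2 i a_def[symmetric]] ak by force
qed

lemma witness_eq:
  assumes "witness_ok [0..<k] S w" shows "w = S"
proof (rule nth_equalityI)
  show "length w = length S" using assms by (simp add: witness_ok_def)
  fix i assume "i < length w"
  then have i: "i < length S" using assms by (simp add: witness_ok_def)
  then obtain js where js: "occurrence [0..<k] S js" "js ! (w ! i) = i" and wk: "w ! i < k"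
    using assms by (auto simp: witness_ok_def)
  then show "w ! i = S ! i" using js unfolding occurrence_def by force
qed


lemma SS_inj: "inj_on (SS k) X"
  by (auto simp: inj_on_def SS_def)

theorem mainTheorem14:
  shows "\<exists>c>0. \<exists>N. \<forall>A. solves_witness_scover A \<longrightarrow>
           (\<forall>n\<ge>N. \<exists>C S. length S = n \<and> real (comparisons A C S) \<ge> c * real n * ln (real n))"
proof (intro exI[of _ "1/12"] conjI exI[of _ "12::nat"] allI impI)
  fix A n assume sol: "solves_witness_scover A" and n: "(12::nat) \<le> n"
  define k where "k = n div 3"
  define m where "m = n - 2 * k"
  define F where "F = {T. set T \<subseteq> {0..<k} \<and> length T = m}"
  have k4: "4 \<le> k" using n by (simp add: k_def)
  have n3: "n \<le> 3 * m" and nkm: "length (SS k T) = n" if "T \<in> F" for T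
    using k4 that by (auto simp: k_def m_def F_def SS_def)
  have "n \<le> 4 * k" using k4 by (simp add: k_def)
  also have "4 * k \<le> k * k" using k4 by simp
  finally have nk: "n \<le> k * k" .
  have finF: "finite F" unfolding F_def by (rule finite_lists_length_eq) simp
  have cardF: "card F = k ^ m" unfolding F_def by (subst card_lists_length_eq) simp_all
  have F0: "replicate m 0 \<in> F" using k4 by (auto simp: F_def)
  have out: "fst (run (A k n) [0..<k] (SS k T)) = Some (SS k T)" if T: "T \<in> F" for T
  proof -
    have cov: "s_cover [0..<k] (SS k T)" using T by (intro SS_cover) (auto simp: F_def)
    have "case fst (run (A k n) [0..<k] (SS k T)) of None \<Rightarrow> \<not> s_cover [0..<k] (SS k T)
          | Some w \<Rightarrow> s_cover [0..<k] (SS k T) \<and> witness_ok [0..<k] (SS k T) w"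
      using sol nkm[OF T] unfolding solves_witness_scover_def by (metis length_upt minus_nat.diff_0)
    then show ?thesis using cov witness_eq by (auto split: option.splits)
  qed
  define d where "d = Max ((\<lambda>T. comparisons A [0..<k] (SS k T)) ` F)"
  have "d \<in> (\<lambda>T. comparisons A [0..<k] (SS k T)) ` F"
    unfolding d_def using finF F0 by (intro Max_in) auto
  then obtain T0 where T0: "T0 \<in> F" "comparisons A [0..<k] (SS k T0) = d" by auto
  have le: "comparisons A [0..<k] (SS k T) \<le> d" if "T \<in> F" for T
    unfolding d_def using finF that by simp
  have sub: "(\<lambda>T. Some (SS k T)) ` F \<subseteq> lv (A k n) d"
  proof
    fix x assume "x \<in> (\<lambda>T. Some (SS k T)) ` F"
    then obtain T where T: "T \<in> F" "x = Some (SS k T)" by auto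
    have "snd (run (A k n) [0..<k] (SS k T)) \<le> d"
      using le[OF T(1)] nkm[OF T(1)] by (simp add: comparisons_def)
    from run_lv[OF this] show "x \<in> lv (A k n) d" using out[OF T(1)] T(2) by simp
  qed
  have "inj_on (\<lambda>T. Some (SS k T)) F" using SS_inj[of k F] by (auto simp: inj_on_def)
  then have "card F \<le> card (lv (A k n) d)"
    using card_inj_on_le[OF _ sub lv_fin] by blast
  also have "\<dots> \<le> 3 ^ d" by (rule lv_card)
  finally have km: "k ^ m \<le> (3::nat) ^ d" using cardF by simp
  have kpos: "0 < real k" using k4 by simp
  have "real m * ln (real k) = ln (real k ^ m)" using kpos by (simp add: ln_realpow)
  also have "\<dots> \<le> ln (3 ^ d)"
    using km kpos by (subst ln_le_cancel_iff) (auto simp: of_nat_power[symmetric] simp del: of_nat_power)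
  also have "\<dots> = real d * ln 3" by (simp add: ln_realpow)
  also have "\<dots> \<le> real d * 2"
    using ln_le_minus_one[of 3] by (intro mult_left_mono) auto
  finally have A1: "real m * ln (real k) \<le> 2 * real d" by simp
  have "ln (real n) \<le> ln (real k * real k)"
    using nk n k4 by (subst ln_le_cancel_iff) (auto simp: of_nat_mult[symmetric] simp del: of_nat_mult)
  also have "\<dots> = 2 * ln (real k)" using kpos by (simp add: ln_mult)
  finally have A2: "ln (real n) \<le> 2 * ln (real k)" .
  have lnk: "0 \<le> ln (real k)" using k4 by simp
  have lnn: "0 \<le> ln (real n)" using n by simp
  have A3: "real n \<le> 3 * real m" using n3[OF F0] by simp
  have "real n * ln (real n) \<le> (3 * real m) * (2 * ln (real k))"
    using A2 A3 lnn by (intro mult_mono) auto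
  also have "\<dots> \<le> 12 * real d" using A1 by simp
  finally have "1/12 * real n * ln (real n) \<le> real d" by simp
  then show "\<exists>C S. length S = n \<and> 1/12 * real n * ln (real n) \<le> real (comparisons A C S)"
    using T0 nkm[OF T0(1)] by metis
qed simp

end
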